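(* Let $\Omega\subset\mathbb{R}^N$ be a bounded domain, $\lambda>0$, $\delta\in(0,1)$, $T>0$, $u_0\in L^2(\Omega)$. Define $g_\delta:\mathbb{R}\to\mathbb{R}$ by $g_\delta(s)=\frac{1}{1-s}$ for $s\le1-\delta$ and $g_\delta(s)=\delta^{-1}$ for $s>1-\delta$, and for $v\in L^2(\Omega)$ define \[ f_\delta(v)=\lambda\,\bigl(g_\delta(v)\bigr)^2\Bigl(1+\int_\Omega g_\delta(v)\,dx\Bigr)^{-2}. \] Let $M=\|u_0\|_{L^2}+1$ and \[ Y_M=\bigl\{u\in C([0,T];L^2(\Omega)):\ \|u\|_{L^\infty([0,T];L^2(\Omega))}\le M\bigr\}. \] Then $f_\delta$ is Lipschitz continuous on $Y_M$: there is a constant $L$ such that $\|f_\delta(u_1(t))-f_\delta(u_2(t))\|_{L^2(\Omega)}\le L\|u_1(t)-u_2(t)\|_{L^2(\Omega)}$ for all $u_1,u_2\in Y_M$ and $t\in[0,T]$. *)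

theory Defs
  imports "HOL-Analysis.Analysis"
begin

definition L2 :: "'a::euclidean_space set \<Rightarrow> ('a \<Rightarrow> real) \<Rightarrow> bool" where
  "L2 \<Omega> v \<longleftrightarrow> v \<in> borel_measurable (lebesgue_on \<Omega>) \<and>
                 integrable (lebesgue_on \<Omega>) (\<lambda>x. (v x)^2)"

definition L2_norm :: "'a::euclidean_space set \<Rightarrow> ('a \<Rightarrow> real) \<Rightarrow> real" where
  "L2_norm \<Omega> v = sqrt (LINT x | lebesgue_on \<Omega>. (v x)^2)"

definition g_delta :: "real \<Rightarrow> real \<Rightarrow> real" where
  "g_delta \<delta> s = (if s \<le> 1 - \<delta> then 1 / (1 - s) else 1 / \<delta>)"

definition f_delta :: "real \<Rightarrow> real \<Rightarrow> 'a::euclidean_space set \<Rightarrow> ('a \<Rightarrow> real) \<Rightarrow> ('a \<Rightarrow> real)" where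
  "f_delta lam \<delta> \<Omega> v = (\<lambda>x. lam * (g_delta \<delta> (v x))^2 /
       (1 + (LINT y | lebesgue_on \<Omega>. g_delta \<delta> (v y)))^2)"

definition Y_M :: "'a::euclidean_space set \<Rightarrow> real \<Rightarrow> real \<Rightarrow> (real \<Rightarrow> 'a \<Rightarrow> real) set" where
  "Y_M \<Omega> T M = {u. (\<forall>t\<in>{0..T}. L2 \<Omega> (u t)) \<and>
      (\<forall>t\<in>{0..T}. ((\<lambda>s. L2_norm \<Omega> (\<lambda>x. u s x - u t x)) \<longlongrightarrow> 0) (at t within {0..T})) \<and>
      (\<forall>t\<in>{0..T}. L2_norm \<Omega> (u t) \<le> M)}"

end

theory Submission imports Defs begin

lemma g_bounds: assumes "0 < d" "d < 1" shows "0 < g_delta d s" "g_delta d s \<le> 1/d"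
  using assms by (auto simp: g_delta_def field_simps)

lemma g_lip: assumes "0 < d" "d < 1" shows "\<bar>g_delta d s - g_delta d t\<bar> \<le> \<bar>s - t\<bar> / d^2"
proof -
  have key: "\<bar>g_delta d s - g_delta d t\<bar> \<le> \<bar>s - t\<bar> / d^2" if st: "t \<le> s" for s t
  proof (cases "s \<le> 1 - d")
    case True
    then have t: "t \<le> 1 - d" using st by simp
    have "g_delta d s - g_delta d t = (s - t) / ((1-s)*(1-t))"
      using True t assms by (simp add: g_delta_def field_simps)
    have "d*d \<le> (1-s)*(1-t)" using True t assms by (intro mult_mono) auto
    then have dd: "d^2 \<le> (1-s)*(1-t)" by (simp add: power2_eq_square)
    have p1: "0 < d^2" using assms by simp
    have p2: "0 < (1-s)*(1-t)" using dd p1 by linarith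
    have "\<bar>(s - t) / ((1-s)*(1-t))\<bar> = (s - t) / ((1-s)*(1-t))" using st p2 by simp
    also have "\<dots> \<le> (s - t) / d^2" using dd st p1 p2 by (intro divide_left_mono) auto
    finally show ?thesis using st by (simp add: \<open>g_delta d s - g_delta d t = _\<close>)
  next
    case False
    show ?thesis
    proof (cases "t \<le> 1 - d")
      case True
      have "g_delta d s - g_delta d t = (1 - d - t) / (d*(1-t))"
        using True False assms by (simp add: g_delta_def field_simps)
      moreover have "d^2 \<le> d*(1-t)" using True assms by (simp add: power2_eq_square)
      moreover have "0 \<le> 1 - d - t" using True by simp
      ultimately have "\<bar>g_delta d s - g_delta d t\<bar> \<le> (1 - d - t) / d^2"
        using assms by (simp add: divide_left_mono)
      also have "\<dots> \<le> \<bar>s - t\<bar> / d^2" using False by (simp add: divide_right_mono)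
      finally show ?thesis .
    next
      case False2: False
      then show ?thesis using False by (simp add: g_delta_def)
    qed
  qed
  show ?thesis
  proof (cases "t \<le> s")
    case True then show ?thesis using key by blast
  next
    case False then show ?thesis using key[of s t] by (simp add: abs_minus_commute)
  qed
qed

lemma g_meas[measurable]: assumes [measurable]: "v \<in> borel_measurable M"
  shows "(\<lambda>x. g_delta d (v x)) \<in> borel_measurable M"
  unfolding g_delta_def by measurable

lemma div_le1: "0 \<le> (y::real) \<Longrightarrow> 1 \<le> D \<Longrightarrow> y / D \<le> y"
  using divide_left_mono[of 1 D y] by simp

lemma pw_bound:
  fixes a1 a2 I1 I2 d e m A lam :: real
  assumes d: "0 < d" and lam: "0 < lam"
    and a1: "0 < a1" "a1 \<le> 1/d" and a2: "0 < a2" "a2 \<le> 1/d"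
    and ae: "\<bar>a1 - a2\<bar> \<le> e/d^2"
    and I1: "0 \<le> I1" "I1 \<le> m/d" and I2: "0 \<le> I2" "I2 \<le> m/d"
    and IA: "\<bar>I1 - I2\<bar> \<le> A/d^2"
  shows "\<bar>lam * a1^2 / (1 + I1)^2 - lam * a2^2 / (1 + I2)^2\<bar>
     \<le> (lam*2/d^3) * e + (lam*(2+2*m/d)/d^4) * A"
proof -
  define D1 where "D1 = (1 + I1)^2"
  define D2 where "D2 = (1 + I2)^2"
  have D1: "1 \<le> D1" unfolding D1_def using I1 by (simp add: one_le_power)
  have D2: "1 \<le> D2" unfolding D2_def using I2 by (simp add: one_le_power)
  have split: "lam * a1^2 / D1 - lam * a2^2 / D2 = lam*(a1^2-a2^2)/D1 + lam*a2^2*(D2-D1)/(D1*D2)"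
    using D1 D2 by (simp add: field_simps)
  have sq: "\<bar>a1^2 - a2^2\<bar> \<le> 2*e/d^3"
  proof -
    have f: "a1^2 - a2^2 = (a1 - a2) * (a1 + a2)" by (simp add: power2_eq_square algebra_simps)
    have "\<bar>a1^2 - a2^2\<bar> = \<bar>a1 - a2\<bar> * (a1 + a2)" unfolding f using a1 a2
      by (simp add: abs_mult)
    also have "\<dots> \<le> (e/d^2) * (2/d)"
      using ae a1 a2 by (intro mult_mono) auto
    also have "\<dots> = 2*e/d^3" by (simp add: power2_eq_square power3_eq_cube)
    finally show ?thesis .
  qed
  have t1: "\<bar>lam*(a1^2-a2^2)/D1\<bar> \<le> lam*2/d^3 * e"
  proof -
    have "\<bar>lam*(a1^2-a2^2)/D1\<bar> = lam*\<bar>a1^2-a2^2\<bar>/D1" using lam D1 by (simp add: abs_mult)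
    also have "\<dots> \<le> lam*\<bar>a1^2-a2^2\<bar>" using D1 lam by (intro div_le1) auto
    also have "\<dots> \<le> lam*(2*e/d^3)" using mult_left_mono[OF sq, of lam] lam by simp
    finally show ?thesis by simp
  qed
  have dD: "\<bar>D2 - D1\<bar> \<le> (A/d^2)*(2+2*m/d)"
  proof -
    have f: "D2 - D1 = - ((I1 - I2) * (2 + I1 + I2))" unfolding D1_def D2_def by (simp add: power2_eq_square algebra_simps)
    have "\<bar>D2 - D1\<bar> = \<bar>I1 - I2\<bar> * (2 + I1 + I2)" unfolding f using I1 I2
      by (simp only: abs_minus_cancel abs_mult)
    also have "\<dots> \<le> (A/d^2)*(2+2*m/d)" using IA I1 I2 by (intro mult_mono) auto
    finally show ?thesis .
  qed
  have t2: "\<bar>lam*a2^2*(D2-D1)/(D1*D2)\<bar> \<le> (lam*(2+2*m/d)/d^4) * A"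
  proof -
    have DD: "1 \<le> D1*D2" using mult_mono[OF D1 D2] D1 by simp
    have "\<bar>lam*a2^2*(D2-D1)/(D1*D2)\<bar> = lam*a2^2*\<bar>D2-D1\<bar>/(D1*D2)" using lam D1 D2 by (simp add: abs_mult)
    also have "\<dots> \<le> lam*a2^2*\<bar>D2-D1\<bar>" using DD lam
      by (intro div_le1) auto
    also have "\<dots> \<le> lam*(1/d)^2*((A/d^2)*(2+2*m/d))"
      using lam a2 dD by (intro mult_mono power_mono) auto
    also have "\<dots> = (lam*(2+2*m/d)/d^4) * A" by (simp add: field_simps power2_eq_square power4_eq_xxxx)
    finally show ?thesis .
  qed
  have e: "lam * a1^2 / (1 + I1)^2 - lam * a2^2 / (1 + I2)^2 = lam*(a1^2-a2^2)/D1 + lam*a2^2*(D2-D1)/(D1*D2)"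
    using split by (simp only: D1_def D2_def)
  show ?thesis unfolding e by (rule order_trans[OF abs_triangle_ineq add_mono[OF t1 t2]])
qed

lemma CS_finite:
  fixes w :: "'b \<Rightarrow> real"
  assumes fm: "finite_measure M" and wm[measurable]: "w \<in> borel_measurable M"
    and wi: "integrable M (\<lambda>x. (w x)^2)"
  shows "(integral\<^sup>L M (\<lambda>x. \<bar>w x\<bar>))^2 \<le> measure M (space M) * integral\<^sup>L M (\<lambda>x. (w x)^2)"
proof -
  interpret finite_measure M by (rule fm)
  have iw: "integrable M w" by (rule square_integrable_imp_integrable[OF wm wi])
  define A where "A = integral\<^sup>L M (\<lambda>x. \<bar>w x\<bar>)"
  define W where "W = integral\<^sup>L M (\<lambda>x. (w x)^2)"
  define \<mu> where "\<mu> = measure M (space M)"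
  have A0: "A \<ge> 0" unfolding A_def by simp
  have mu0: "\<mu> \<ge> 0" unfolding \<mu>_def by simp
  have q: "0 \<le> W - 2*c*A + c^2*\<mu>" for c
  proof -
    have "0 \<le> integral\<^sup>L M (\<lambda>x. (\<bar>w x\<bar> - c)^2)" by simp
    also have "(\<lambda>x. (\<bar>w x\<bar> - c)^2) = (\<lambda>x. ((w x)^2 - 2*c*\<bar>w x\<bar>) + c^2)"
      by (rule ext) (simp add: power2_diff power2_abs)
    also have "integral\<^sup>L M \<dots> = W - 2*c*A + c^2*\<mu>"
    proof -
      have i1: "integrable M (\<lambda>x. (w x)^2 - 2*c*\<bar>w x\<bar>)" using iw wi by auto
      have "integral\<^sup>L M (\<lambda>x. ((w x)^2 - 2*c*\<bar>w x\<bar>) + c^2)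
          = integral\<^sup>L M (\<lambda>x. (w x)^2 - 2*c*\<bar>w x\<bar>) + c^2*\<mu>"
        using i1 by (simp add: integral_add \<mu>_def lebesgue_integral_const)
      also have "integral\<^sup>L M (\<lambda>x. (w x)^2 - 2*c*\<bar>w x\<bar>) = W - 2*c*A"
        using iw wi by (simp add: A_def W_def integral_diff)
      finally show ?thesis .
    qed
    finally show ?thesis .
  qed
  show ?thesis
  proof (cases "\<mu> > 0")
    case True
    have "0 \<le> W - 2*(A/\<mu>)*A + (A/\<mu>)^2*\<mu>" by (rule q)
    also have "\<dots> = W - A^2/\<mu>" using True by (simp add: field_simps power2_eq_square)
    finally have "A^2/\<mu> \<le> W" by simp
    then have "A^2 \<le> \<mu> * W" using True by (simp add: divide_le_eq mult.commute)
    then show ?thesis by (simp add: A_def W_def \<mu>_def)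
  next
    case False
    then have m: "\<mu> = 0" using mu0 by simp
    have "A = 0"
    proof (rule ccontr)
      assume "A \<noteq> 0"
      then have "A > 0" using A0 by simp
      have "0 \<le> W - 2*((\<bar>W\<bar>+1)/(2*A))*A + ((\<bar>W\<bar>+1)/(2*A))^2*\<mu>" by (rule q)
      also have "\<dots> = W - (\<bar>W\<bar>+1)" using \<open>A > 0\<close> m by (simp add: field_simps)
      finally show False by simp
    qed
    then show ?thesis using m by (simp add: A_def W_def \<mu>_def)
  qed
qed

lemma sq_sum_le: "((a::real) + b)^2 \<le> 2*a^2 + 2*b^2"
proof -
  have "0 \<le> (a - b)^2" by simp
  then show ?thesis by (simp add: power2_eq_square algebra_simps)
qed

lemma sq_diff_le: "((a::real) - b)^2 \<le> 2*a^2 + 2*b^2"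
  using sq_sum_le[of a "-b"] by simp

lemma core:
  fixes M :: "'b measure" and lam d :: real
  assumes fm: "finite_measure M" and lam: "0 < lam" and d: "0 < d" "d < 1"
  shows "\<exists>L. \<forall>v1 v2. v1 \<in> borel_measurable M \<longrightarrow> integrable M (\<lambda>x. (v1 x)^2) \<longrightarrow>
     v2 \<in> borel_measurable M \<longrightarrow> integrable M (\<lambda>x. (v2 x)^2) \<longrightarrow>
     sqrt (LINT x|M. (lam * (g_delta d (v1 x))^2 / (1 + (LINT y|M. g_delta d (v1 y)))^2
                     - lam * (g_delta d (v2 x))^2 / (1 + (LINT y|M. g_delta d (v2 y)))^2)^2)
     \<le> L * sqrt (LINT x|M. (v1 x - v2 x)^2)"
proof -
  interpret finite_measure M by (rule fm)
  define \<mu> where "\<mu> = measure M (space M)"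
  define P where "P = lam*2/d^3"
  define Q where "Q = lam*(2+2*\<mu>/d)/d^4"
  define L where "L = sqrt (2*P^2 + 2*Q^2*\<mu>^2)"
  have mu0: "0 \<le> \<mu>" unfolding \<mu>_def by simp
  have P0: "0 \<le> P" unfolding P_def using lam d by simp
  have Q0: "0 \<le> Q" unfolding Q_def using lam d mu0 by simp
  define I where "I v = (LINT y|M. g_delta d (v y))" for v :: "'b \<Rightarrow> real"
  have gint: "integrable M (\<lambda>y. g_delta d (v y))" if [measurable]: "v \<in> borel_measurable M" for v
  proof (rule integrable_const_bound[where B="1/d"])
    have "\<bar>g_delta d s\<bar> \<le> 1/d" for s using g_bounds[OF d, of s] by simp
    then show "AE x in M. norm (g_delta d (v x)) \<le> 1/d" by (intro always_eventually allI) simp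
  qed measurable
  have Ib: "0 \<le> I v \<and> I v \<le> \<mu>/d" if [measurable]: "v \<in> borel_measurable M" for v
  proof
    have "0 \<le> g_delta d s" for s using g_bounds[OF d, of s] by simp
    then show "0 \<le> I v" unfolding I_def by (intro integral_nonneg_AE always_eventually allI) simp
    have "I v \<le> (LINT y|M. 1/d)" unfolding I_def
      using g_bounds[OF d] gint[OF that] by (intro integral_mono) auto
    also have "\<dots> = \<mu>/d" by (simp add: \<mu>_def)
    finally show "I v \<le> \<mu>/d" .
  qed
  show ?thesis
  proof (rule exI[of _ L], intro allI impI)
    fix v1 v2 :: "'b \<Rightarrow> real"
    assume v1[measurable]: "v1 \<in> borel_measurable M" and i1: "integrable M (\<lambda>x. (v1 x)^2)"
      and v2[measurable]: "v2 \<in> borel_measurable M" and i2: "integrable M (\<lambda>x. (v2 x)^2)"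
    define w where "w x = v1 x - v2 x" for x
    have wm[measurable]: "w \<in> borel_measurable M" unfolding w_def by measurable
    have w2: "integrable M (\<lambda>x. (w x)^2)"
    proof (rule Bochner_Integration.integrable_bound[where f="\<lambda>x. 2*(v1 x)^2 + 2*(v2 x)^2"])
      show "integrable M (\<lambda>x. 2*(v1 x)^2 + 2*(v2 x)^2)" using i1 i2 by auto
      show "(\<lambda>x. (w x)^2) \<in> borel_measurable M" by measurable
      show "AE x in M. norm ((w x)^2) \<le> norm (2*(v1 x)^2 + 2*(v2 x)^2)"
        by (intro always_eventually allI) (simp add: w_def sq_diff_le)
    qed
    have wi: "integrable M w" by (rule square_integrable_imp_integrable[OF wm w2])
    have wa: "integrable M (\<lambda>x. \<bar>w x\<bar>)" using wi by auto
    define A where "A = (LINT x|M. \<bar>w x\<bar>)"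
    define W where "W = (LINT x|M. (w x)^2)"
    have A0: "0 \<le> A" unfolding A_def by simp
    have W0: "0 \<le> W" unfolding W_def by simp
    have CS: "A^2 \<le> \<mu> * W" unfolding A_def W_def \<mu>_def by (rule CS_finite[OF fm wm w2])
    have glip: "\<bar>g_delta d (v1 x) - g_delta d (v2 x)\<bar> \<le> \<bar>w x\<bar>/d^2" for x
      unfolding w_def by (rule g_lip[OF d])
    have IA: "\<bar>I v1 - I v2\<bar> \<le> A/d^2"
    proof -
      have "I v1 - I v2 = (LINT x|M. g_delta d (v1 x) - g_delta d (v2 x))"
        unfolding I_def using gint[OF v1] gint[OF v2] by simp
      also have "\<dots> \<le> (LINT x|M. \<bar>w x\<bar>/d^2)"
        using gint[OF v1] gint[OF v2] wa glip by (intro integral_mono) (auto simp: abs_le_iff)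
      finally have a: "I v1 - I v2 \<le> A/d^2" by (simp add: A_def)
      have "I v2 - I v1 = (LINT x|M. g_delta d (v2 x) - g_delta d (v1 x))"
        unfolding I_def using gint[OF v1] gint[OF v2] by simp
      also have "\<dots> \<le> (LINT x|M. \<bar>w x\<bar>/d^2)"
        using gint[OF v1] gint[OF v2] wa glip by (intro integral_mono) (auto simp: abs_le_iff)
      finally have b: "I v2 - I v1 \<le> A/d^2" by (simp add: A_def)
      show ?thesis using a b by linarith
    qed
    define F where "F x = lam * (g_delta d (v1 x))^2 / (1 + I v1)^2 - lam * (g_delta d (v2 x))^2 / (1 + I v2)^2" for x
    have Fm[measurable]: "F \<in> borel_measurable M" unfolding F_def by measurable
    have Fb: "\<bar>F x\<bar> \<le> P * \<bar>w x\<bar> + Q * A" for x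
    proof -
      have "\<bar>F x\<bar> \<le> (lam*2/d^3) * \<bar>w x\<bar> + (lam*(2+2*\<mu>/d)/d^4) * A"
        unfolding F_def
        by (rule pw_bound) (use d lam g_bounds[OF d] glip Ib[OF v1] Ib[OF v2] IA in auto)
      then show ?thesis by (simp add: P_def Q_def)
    qed
    have F2: "(F x)^2 \<le> 2*P^2*(w x)^2 + 2*Q^2*A^2" for x
    proof -
      have "(F x)^2 = \<bar>F x\<bar>^2" by simp
      also have "\<dots> \<le> (P * \<bar>w x\<bar> + Q * A)^2" using Fb[of x] by (intro power_mono) auto
      also have "\<dots> \<le> 2*(P * \<bar>w x\<bar>)^2 + 2*(Q*A)^2" by (rule sq_sum_le)
      also have "\<dots> = 2*P^2*(w x)^2 + 2*Q^2*A^2" by (simp add: power_mult_distrib)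
      finally show ?thesis .
    qed
    have Ri: "integrable M (\<lambda>x. 2*P^2*(w x)^2 + 2*Q^2*A^2)" using w2 by auto
    have Fi: "integrable M (\<lambda>x. (F x)^2)"
    proof (rule Bochner_Integration.integrable_bound[OF Ri])
      show "(\<lambda>x. (F x)^2) \<in> borel_measurable M" by measurable
      show "AE x in M. norm ((F x)^2) \<le> norm (2*P^2*(w x)^2 + 2*Q^2*A^2)"
      proof (intro always_eventually allI)
        fix x
        have "0 \<le> 2*P^2*(w x)^2 + 2*Q^2*A^2" by simp
        then show "norm ((F x)^2) \<le> norm (2*P^2*(w x)^2 + 2*Q^2*A^2)"
          using F2[of x] by (simp only: real_norm_def abs_of_nonneg zero_le_power2)
      qed
    qed
    have "(LINT x|M. (F x)^2) \<le> (LINT x|M. 2*P^2*(w x)^2 + 2*Q^2*A^2)"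
      using Fi Ri F2 by (intro integral_mono) auto
    also have "\<dots> = 2*P^2*W + 2*Q^2*A^2*\<mu>"
      using w2 by (simp add: W_def \<mu>_def)
    also have "\<dots> \<le> 2*P^2*W + 2*Q^2*(\<mu>*W)*\<mu>"
      using CS mu0 by (intro add_left_mono mult_right_mono mult_left_mono) auto
    also have "\<dots> = (2*P^2 + 2*Q^2*\<mu>^2) * W" by (simp add: algebra_simps power2_eq_square)
    finally have main: "(LINT x|M. (F x)^2) \<le> (2*P^2 + 2*Q^2*\<mu>^2) * W" .
    have "sqrt (LINT x|M. (F x)^2) \<le> sqrt ((2*P^2 + 2*Q^2*\<mu>^2) * W)"
      using main by (rule real_sqrt_le_mono)
    also have "\<dots> = L * sqrt W" unfolding L_def by (simp add: real_sqrt_mult)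
    finally show "sqrt (LINT x|M. (lam * (g_delta d (v1 x))^2 / (1 + (LINT y|M. g_delta d (v1 y)))^2
                     - lam * (g_delta d (v2 x))^2 / (1 + (LINT y|M. g_delta d (v2 y)))^2)^2)
     \<le> L * sqrt (LINT x|M. (v1 x - v2 x)^2)"
      by (simp add: F_def I_def W_def w_def)
  qed
qed

theorem lemma3p1:
  fixes \<Omega> :: "'a::euclidean_space set" and lam \<delta> T :: real and u0 :: "'a \<Rightarrow> real"
  assumes "open \<Omega>" "connected \<Omega>" "bounded \<Omega>" "\<Omega> \<noteq> {}"
    and "lam > 0" "0 < \<delta>" "\<delta> < 1" "T > 0"
    and "L2 \<Omega> u0"
  shows "\<exists>L. \<forall>u1\<in>Y_M \<Omega> T (L2_norm \<Omega> u0 + 1). \<forall>u2\<in>Y_M \<Omega> T (L2_norm \<Omega> u0 + 1). \<forall>t\<in>{0..T}.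
           L2_norm \<Omega> (\<lambda>x. f_delta lam \<delta> \<Omega> (u1 t) x - f_delta lam \<delta> \<Omega> (u2 t) x)
             \<le> L * L2_norm \<Omega> (\<lambda>x. u1 t x - u2 t x)"
proof -
  have fm: "finite_measure (lebesgue_on \<Omega>)"
    by (rule finite_measure_lebesgue_on[OF lmeasurable_open[OF assms(3) assms(1)]])
  obtain L where L: "\<And>v1 v2. v1 \<in> borel_measurable (lebesgue_on \<Omega>) \<Longrightarrow> integrable (lebesgue_on \<Omega>) (\<lambda>x. (v1 x)^2) \<Longrightarrow>
     v2 \<in> borel_measurable (lebesgue_on \<Omega>) \<Longrightarrow> integrable (lebesgue_on \<Omega>) (\<lambda>x. (v2 x)^2) \<Longrightarrow>
     sqrt (LINT x|lebesgue_on \<Omega>. (lam * (g_delta \<delta> (v1 x))^2 / (1 + (LINT y|lebesgue_on \<Omega>. g_delta \<delta> (v1 y)))^2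
                     - lam * (g_delta \<delta> (v2 x))^2 / (1 + (LINT y|lebesgue_on \<Omega>. g_delta \<delta> (v2 y)))^2)^2)
     \<le> L * sqrt (LINT x|lebesgue_on \<Omega>. (v1 x - v2 x)^2)"
    using core[OF fm assms(5) assms(6) assms(7)] by blast
  show ?thesis
  proof (rule exI[of _ L], intro ballI)
    fix u1 u2 t
    assume u1: "u1 \<in> Y_M \<Omega> T (L2_norm \<Omega> u0 + 1)" and u2: "u2 \<in> Y_M \<Omega> T (L2_norm \<Omega> u0 + 1)"
      and t: "t \<in> {0..T}"
    have a: "L2 \<Omega> (u1 t)" using u1 t unfolding Y_M_def by blast
    have b: "L2 \<Omega> (u2 t)" using u2 t unfolding Y_M_def by blast
    show "L2_norm \<Omega> (\<lambda>x. f_delta lam \<delta> \<Omega> (u1 t) x - f_delta lam \<delta> \<Omega> (u2 t) x)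
             \<le> L * L2_norm \<Omega> (\<lambda>x. u1 t x - u2 t x)"
      unfolding L2_norm_def f_delta_def
      using L[of "u1 t" "u2 t"] a b unfolding L2_def by blast
  qed
qed
end
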